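(* Let $\lambda>0$. Then $\lim_{c_0\to\infty}M_2(\lambda,c_0)=\sqrt{2}$.
   Context: For $A\in\mathbb{R}^{3\times3}$ let $\lambda_1(A),\lambda_2(A),\lambda_3(A)$ be its singular values, $P(A)=\sum_{1\le i<j\le3}\lambda_i(A)\lambda_j(A)-\lambda\sum_i\lambda_i(A)$, $N(A)=\operatorname{tr}\operatorname{cof}A-\lambda\operatorname{tr}A$ (cof the cofactor matrix), and $G(A)=P(A)-N(A)$. $|\cdot|$ is the Frobenius norm and $\mathbf{1}$ the identity. For $c_0>0$, $M_2(\lambda,c_0)=\sup\{|G(A)|/|A-\lambda\mathbf{1}|^2:\ |A-\lambda\mathbf{1}|\ge c_0\}$. *)

theory Defs
  imports "HOL-Analysis.Analysis"
begin

type_synonym mat3 = "real^3^3"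

definition diag3 :: "real^3 \<Rightarrow> mat3" where
  "diag3 l = (\<chi> i j. if i = j then l $ i else 0)"

text \<open>The multiset of singular values is uniquely determined, so symmetric
  functions of them are well defined.\<close>
definition svals :: "mat3 \<Rightarrow> real^3" where
  "svals A = (SOME l. (\<forall>i. l $ i \<ge> 0) \<and>
      (\<exists>U V. orthogonal_matrix U \<and> orthogonal_matrix V \<and> A = U ** diag3 l ** V))"

text \<open>Cofactor matrix: entry (i,j) is det of A with row i replaced by e_j,
  i.e. (-1)^(i+j) times the (i,j) minor.\<close>
definition cof :: "mat3 \<Rightarrow> mat3" where
  "cof A = (\<chi> i j. det (\<chi> k l. if k = i then (if l = j then 1 else 0) else A $ k $ l))"

definition Pfun :: "real \<Rightarrow> mat3 \<Rightarrow> real" where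
  "Pfun lam A = (\<Sum>i\<in>UNIV. \<Sum>j\<in>UNIV. if i < j then svals A $ i * svals A $ j else 0)
                 - lam * (\<Sum>i\<in>UNIV. svals A $ i)"

definition Nfun :: "real \<Rightarrow> mat3 \<Rightarrow> real" where
  "Nfun lam A = trace (cof A) - lam * trace A"

definition Gfun :: "real \<Rightarrow> mat3 \<Rightarrow> real" where
  "Gfun lam A = Pfun lam A - Nfun lam A"

text \<open>norm on real^3^3 is the Frobenius norm.\<close>
definition M2 :: "real \<Rightarrow> real \<Rightarrow> real" where
  "M2 lam c0 = (SUP A \<in> {A :: mat3. norm (A - lam *\<^sub>R mat 1) \<ge> c0}.
                  \<bar>Gfun lam A\<bar> / (norm (A - lam *\<^sub>R mat 1))\<^sup>2)"

end

theory Submission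
  imports Defs "HOL-Real_Asymp.Real_Asymp"
begin

lemma lt3: "(1::3) < 2" "(3::3) < 1" "(3::3) < 2" "\<not> (2::3) < 1" "\<not> (1::3) < 3" "\<not> (2::3) < 3"
  by (simp_all add: less_bit1_def bit1.Rep_numeral bit1.Rep_1)

lemma trace_cof: "trace (cof A) = A$2$2*A$3$3 - A$2$3*A$3$2 + A$1$1*A$3$3 - A$1$3*A$3$1 + A$1$1*A$2$2 - A$1$2*A$2$1"
  by (simp add: cof_def trace_def sum_3 det_3)

lemma Pfun_eq: "Pfun lam A = svals A$1 * svals A$2 + svals A$1 * svals A$3 + svals A$2 * svals A$3 - lam * (svals A$1 + svals A$2 + svals A$3)"
  by (simp add: Pfun_def sum_3 lt3 algebra_simps)

lemma cramer3: "transpose (cof W) ** W = det W *\<^sub>R mat 1"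
  by (simp add: vec_eq_iff forall_3 matrix_matrix_mult_def sum_3 cof_def det_3 mat_def transpose_def algebra_simps)

lemma scaleR_mat1_mul: "((c::real) *\<^sub>R mat 1) ** (B::real^3^3) = c *\<^sub>R B"
  by (simp add: vec_eq_iff matrix_matrix_mult_def mat_def sum_3 forall_3)

lemma cof_orth: assumes "orthogonal_matrix W" shows "cof W = det W *\<^sub>R W"
proof -
  have "transpose (cof W) = transpose (cof W) ** (W ** transpose W)"
    using assms by (simp add: orthogonal_matrix_def)
  also have "\<dots> = det W *\<^sub>R transpose W"
    by (simp add: matrix_mul_assoc cramer3 scaleR_mat1_mul)
  finally have "transpose (transpose (cof W)) = transpose (det W *\<^sub>R transpose W)" by simp
  then show ?thesis by (simp add: transpose_scalar)
qed


lemma rot_tr: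
  fixes a11 a12 a13 a21 a22 a23 a31 a32 a33 :: real
  assumes r1: "a11^2 + a12^2 + a13^2 = 1" and r2: "a21^2+a22^2+a23^2 = 1" and r3: "a31^2+a32^2+a33^2 = 1"
   and c1: "a11 = a22*a33 - a23*a32" and c2: "a22 = a11*a33 - a13*a31" and c3: "a33 = a11*a22 - a12*a21"
  shows "1 + a11 + a22 + a33 \<ge> 0"
proof -
  let ?t = "a11 + a22 + a33"
  have id: "(a12-a21)^2+(a13-a31)^2+(a23-a32)^2 = (3 - ?t)*(1+?t)"
  proof -
    have "(a12-a21)^2+(a13-a31)^2+(a23-a32)^2 - (3 - ?t)*(1+?t) =
      (a11^2 + a12^2 + a13^2 - 1) + (a21^2+a22^2+a23^2 - 1) + (a31^2+a32^2+a33^2 - 1)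
      + 2*((a22*a33 - a23*a32 - a11) + (a11*a33 - a13*a31 - a22) + (a11*a22 - a12*a21 - a33))"
      by (simp add: power2_eq_square algebra_simps)
    also have "\<dots> = 0"
    proof -
      have z: "a11^2 + a12^2 + a13^2 - 1 = 0" "a21^2+a22^2+a23^2 - 1 = 0" "a31^2+a32^2+a33^2 - 1 = 0"
        "a22*a33 - a23*a32 - a11 = 0" "a11*a33 - a13*a31 - a22 = 0" "a11*a22 - a12*a21 - a33 = 0"
        using r1 r2 r3 c1 c2 c3 by linarith+
      show ?thesis by (simp only: z) simp
    qed
    finally show ?thesis by simp
  qed
  have le1: "a11 \<le> 1" "a22 \<le> 1" "a33 \<le> 1"
  proof -
    have "a11^2 \<le> 1" using r1 zero_le_power2[of a12] zero_le_power2[of a13] by linarith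
    moreover have "a22^2 \<le> 1" using r2 zero_le_power2[of a21] zero_le_power2[of a23] by linarith
    moreover have "a33^2 \<le> 1" using r3 zero_le_power2[of a31] zero_le_power2[of a32] by linarith
    ultimately show "a11 \<le> 1" "a22 \<le> 1" "a33 \<le> 1" by (auto simp: abs_square_le_1 abs_le_iff)
  qed
  show ?thesis
  proof (cases "?t = 3")
    case True then show ?thesis by simp
  next
    case False
    then have "3 - ?t > 0" using le1 by simp
    moreover have "(3 - ?t)*(1+?t) \<ge> 0" unfolding id[symmetric] by simp
    ultimately show ?thesis by (simp add: zero_le_mult_iff)
  qed
qed

lemma rot4:
  fixes a11 a12 a13 a21 a22 a23 a31 a32 a33 :: real
  assumes r1: "a11^2 + a12^2 + a13^2 = 1" and r2: "a21^2+a22^2+a23^2 = 1" and r3: "a31^2+a32^2+a33^2 = 1"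
   and c1: "a11 = a22*a33 - a23*a32" and c2: "a22 = a11*a33 - a13*a31" and c3: "a33 = a11*a22 - a12*a21"
  shows "1 + a11 + a22 + a33 \<ge> 0" "1 + a11 - a22 - a33 \<ge> 0" "1 - a11 + a22 - a33 \<ge> 0" "1 - a11 - a22 + a33 \<ge> 0"
proof -
  show "1 + a11 + a22 + a33 \<ge> 0" by (rule rot_tr[OF assms])
  have "1 + a11 + (-a22) + (-a33) \<ge> 0"
    apply (rule rot_tr[of a11 "-a12" "-a13" a21 "-a22" "-a23" a31 "-a32" "-a33"])
    using r1 apply simp using r2 apply simp using r3 apply simp
    using c1 apply simp using c2 apply simp using c3 apply simp done
  then show "1 + a11 - a22 - a33 \<ge> 0" by simp
  have "1 + (-a11) + a22 + (-a33) \<ge> 0"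
    apply (rule rot_tr[of "-a11" a12 "-a13" "-a21" a22 "-a23" "-a31" a32 "-a33"])
    using r1 apply simp using r2 apply simp using r3 apply simp
    using c1 apply simp using c2 apply simp using c3 apply simp done
  then show "1 - a11 + a22 - a33 \<ge> 0" by simp
  have "1 + (-a11) + (-a22) + a33 \<ge> 0"
    apply (rule rot_tr[of "-a11" "-a12" a13 "-a21" "-a22" a23 "-a31" "-a32" a33])
    using r1 apply simp using r2 apply simp using r3 apply simp
    using c1 apply simp using c2 apply simp using c3 apply simp done
  then show "1 - a11 - a22 + a33 \<ge> 0" by simp
qed

lemma Qbound:
  fixes l1 l2 l3 x1 x2 x3 :: real
  assumes "l1 \<ge> 0" "l2 \<ge> 0" "l3 \<ge> 0"
   and t0: "1 + x1 + x2 + x3 \<ge> 0" and t1: "1 + x1 - x2 - x3 \<ge> 0" and t2: "1 - x1 + x2 - x3 \<ge> 0" and t3: "1 - x1 - x2 + x3 \<ge> 0"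
  shows "l2*l3*(1-x1) + l1*l3*(1-x2) + l1*l2*(1-x3) \<le> sqrt 2 * (l1^2+l2^2+l3^2)"
proof -
  let ?S = "l1^2+l2^2+l3^2"
  have key: "2*a*(b+c) \<le> sqrt 2 * (a^2+b^2+c^2)" for a b c :: real
  proof -
    have s2: "sqrt 2 * sqrt 2 = 2" by simp
    have "0 \<le> (sqrt 2 / 2) * (sqrt 2 * a - (b+c))^2 + (sqrt 2/2) * (b - c)^2"
      by simp
    also have "\<dots> = sqrt 2 * (a^2+b^2+c^2) - 2*a*(b+c)"
      by (simp add: power2_eq_square algebra_simps s2) (simp add: field_simps)
    finally show ?thesis by simp
  qed
  define c1 where "c1 = (1 + x1 - x2 - x3)/4"
  define c2 where "c2 = (1 - x1 + x2 - x3)/4"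
  define c3 where "c3 = (1 - x1 - x2 + x3)/4"
  have cs: "c1 \<ge> 0" "c2 \<ge> 0" "c3 \<ge> 0" "c1 + c2 + c3 \<le> 1"
    using t0 t1 t2 t3 by (simp_all add: c1_def c2_def c3_def field_simps)
  have "l2*l3*(1-x1) + l1*l3*(1-x2) + l1*l2*(1-x3)
      = c1 * (2*l1*(l2+l3)) + c2 * (2*l2*(l1+l3)) + c3 * (2*l3*(l1+l2))"
    by (simp add: c1_def c2_def c3_def field_simps)
  also have "\<dots> \<le> c1 * (sqrt 2 * ?S) + c2 * (sqrt 2 * ?S) + c3 * (sqrt 2 * ?S)"
  proof -
    have k1: "2*l1*(l2+l3) \<le> sqrt 2 * ?S" using key[of l1 l2 l3] by simp
    have k2: "2*l2*(l1+l3) \<le> sqrt 2 * ?S" using key[of l2 l1 l3] by (simp add: ac_simps)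
    have k3: "2*l3*(l1+l2) \<le> sqrt 2 * ?S" using key[of l3 l1 l2] by (simp add: ac_simps)
    show ?thesis
      using mult_left_mono[OF k1 cs(1)] mult_left_mono[OF k2 cs(2)] mult_left_mono[OF k3 cs(3)]
      by linarith
  qed
  also have "\<dots> = (c1+c2+c3) * (sqrt 2 * ?S)" by (simp add: algebra_simps)
  also have "\<dots> \<le> 1 * (sqrt 2 * ?S)"
    using cs(4) by (rule mult_right_mono) simp
  finally show ?thesis by simp
qed

lemma trace_cof_alt: "trace (cof A) = ((trace A)^2 - trace (A ** A))/2"
  unfolding trace_cof by (simp add: trace_def sum_3 matrix_matrix_mult_def power2_eq_square algebra_simps)

lemma diag_mul: "diag3 l ** W = (\<chi> i j. l$i * W$i$j)"
  by (simp add: vec_eq_iff forall_3 diag3_def matrix_matrix_mult_def sum_3)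

lemma transpose_diag3: "transpose (diag3 l) = diag3 l"
  by (simp add: vec_eq_iff forall_3 diag3_def transpose_def)

lemma norm_sq_trace: "(norm (A::real^3^3))^2 = trace (transpose A ** A)"
  unfolding power2_norm_eq_inner by (simp add: inner_vec_def trace_def sum_3 matrix_matrix_mult_def transpose_def)

lemma norm_sq_entries: "(norm (A::real^3^3))^2 = (\<Sum>i\<in>UNIV. \<Sum>j\<in>UNIV. (A$i$j)^2)"
  unfolding power2_norm_eq_inner by (simp add: inner_vec_def power2_eq_square)

lemma decomp:
  assumes oU: "orthogonal_matrix U" and oV: "orthogonal_matrix V" and A: "A = U ** diag3 l ** V"
  shows "trace A = l$1*(V**U)$1$1 + l$2*(V**U)$2$2 + l$3*(V**U)$3$3"
    "trace (cof A) = det (V**U) * (l$2*l$3*(V**U)$1$1 + l$1*l$3*(V**U)$2$2 + l$1*l$2*(V**U)$3$3)"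
    "(norm A)^2 = (l$1)^2 + (l$2)^2 + (l$3)^2"
proof -
  define W where "W = V ** U"
  define D where "D = diag3 l"
  have oW: "orthogonal_matrix W" using oU oV by (simp add: W_def orthogonal_matrix_mul)
  have tA: "trace A = trace (D ** W)"
  proof -
    have "trace A = trace (U ** (D ** V))" by (simp add: A D_def matrix_mul_assoc)
    also have "\<dots> = trace ((D ** V) ** U)" by (rule trace_mul_sym)
    finally show ?thesis by (simp add: W_def matrix_mul_assoc)
  qed
  have tAA: "trace (A ** A) = trace ((D ** W) ** (D ** W))"
  proof -
    have "trace (A ** A) = trace (U ** (D ** V ** U ** D ** V))" by (simp add: A D_def matrix_mul_assoc)
    also have "\<dots> = trace ((D ** V ** U ** D ** V) ** U)" by (rule trace_mul_sym)
    finally show ?thesis by (simp add: W_def matrix_mul_assoc)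
  qed
  have tc: "trace (cof A) = trace (cof (D ** W))"
    by (simp add: trace_cof_alt tA tAA)
  have cW: "cof W = det W *\<^sub>R W" by (rule cof_orth[OF oW])
  have c11: "W$2$2*W$3$3 - W$2$3*W$3$2 = det W * W$1$1"
    using arg_cong[OF cW, of "\<lambda>M. M$1$1"] by (simp add: cof_def det_3)
  have c22: "W$1$1*W$3$3 - W$1$3*W$3$1 = det W * W$2$2"
    using arg_cong[OF cW, of "\<lambda>M. M$2$2"] by (simp add: cof_def det_3)
  have c33: "W$1$1*W$2$2 - W$1$2*W$2$1 = det W * W$3$3"
    using arg_cong[OF cW, of "\<lambda>M. M$3$3"] by (simp add: cof_def det_3)
  have "trace (cof (D ** W)) = l$2*l$3*(W$2$2*W$3$3 - W$2$3*W$3$2) + l$1*l$3*(W$1$1*W$3$3 - W$1$3*W$3$1)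
      + l$1*l$2*(W$1$1*W$2$2 - W$1$2*W$2$1)"
    by (simp add: trace_cof D_def diag_mul algebra_simps)
  then show "trace (cof A) = det (V**U) * (l$2*l$3*(V**U)$1$1 + l$1*l$3*(V**U)$2$2 + l$1*l$2*(V**U)$3$3)"
    unfolding tc c11 c22 c33 W_def[symmetric] by (simp add: algebra_simps)
  show "trace A = l$1*(V**U)$1$1 + l$2*(V**U)$2$2 + l$3*(V**U)$3$3"
    unfolding tA W_def[symmetric] by (simp add: D_def diag_mul trace_def sum_3)
  have "transpose A ** A = transpose V ** (D ** (transpose U ** U) ** D) ** V"
    by (simp add: A D_def matrix_transpose_mul transpose_diag3 matrix_mul_assoc)
  also have "\<dots> = transpose V ** ((D ** D) ** V)"
    using oU unfolding orthogonal_matrix_def by (simp add: matrix_mul_assoc)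
  finally have tt: "transpose A ** A = transpose V ** ((D ** D) ** V)" .
  have "trace (transpose A ** A) = trace (((D ** D) ** V) ** transpose V)"
    unfolding tt by (rule trace_mul_sym)
  also have "((D ** D) ** V) ** transpose V = D ** D"
    using oV unfolding orthogonal_matrix_def by (simp add: matrix_mul_assoc[symmetric])
  also have "trace (D ** D) = (l$1)^2 + (l$2)^2 + (l$3)^2"
    by (simp add: D_def diag_mul trace_def sum_3) (simp add: diag3_def power2_eq_square)
  finally show "(norm A)^2 = (l$1)^2 + (l$2)^2 + (l$3)^2" by (simp add: norm_sq_trace)
qed

lemma orth_facts:
  fixes W :: "real^3^3"
  assumes oW: "orthogonal_matrix W"
  shows "(W$1$1)^2+(W$1$2)^2+(W$1$3)^2 = 1" "(W$2$1)^2+(W$2$2)^2+(W$2$3)^2 = 1"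
    "(W$3$1)^2+(W$3$2)^2+(W$3$3)^2 = 1"
    "W$2$2*W$3$3 - W$2$3*W$3$2 = det W * W$1$1"
    "W$1$1*W$3$3 - W$1$3*W$3$1 = det W * W$2$2"
    "W$1$1*W$2$2 - W$1$2*W$2$1 = det W * W$3$3"
proof -
  have m: "W ** transpose W = mat 1" using oW by (simp add: orthogonal_matrix_def)
  show "(W$1$1)^2+(W$1$2)^2+(W$1$3)^2 = 1"
    using arg_cong[OF m, of "\<lambda>M. M$1$1"] by (simp add: matrix_matrix_mult_def sum_3 transpose_def mat_def power2_eq_square)
  show "(W$2$1)^2+(W$2$2)^2+(W$2$3)^2 = 1"
    using arg_cong[OF m, of "\<lambda>M. M$2$2"] by (simp add: matrix_matrix_mult_def sum_3 transpose_def mat_def power2_eq_square)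
  show "(W$3$1)^2+(W$3$2)^2+(W$3$3)^2 = 1"
    using arg_cong[OF m, of "\<lambda>M. M$3$3"] by (simp add: matrix_matrix_mult_def sum_3 transpose_def mat_def power2_eq_square)
  have cW: "cof W = det W *\<^sub>R W" by (rule cof_orth[OF oW])
  show "W$2$2*W$3$3 - W$2$3*W$3$2 = det W * W$1$1"
    using arg_cong[OF cW, of "\<lambda>M. M$1$1"] by (simp add: cof_def det_3)
  show "W$1$1*W$3$3 - W$1$3*W$3$1 = det W * W$2$2"
    using arg_cong[OF cW, of "\<lambda>M. M$2$2"] by (simp add: cof_def det_3)
  show "W$1$1*W$2$2 - W$1$2*W$2$1 = det W * W$3$3"
    using arg_cong[OF cW, of "\<lambda>M. M$3$3"] by (simp add: cof_def det_3)
qed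

lemma quad_zero:
  fixes a b :: real
  assumes h: "\<And>t. 2*t*a + t^2*b \<le> 0" and a0: "a \<ge> 0"
  shows "a = 0"
proof (rule ccontr)
  assume "a \<noteq> 0"
  then have ap: "a > 0" using a0 by simp
  define t where "t = a / (\<bar>b\<bar> + 1)"
  have tp: "t > 0" using ap by (simp add: t_def add_pos_nonneg)
  have "2*t*a + t^2*b \<le> 0" by (rule h)
  then have "t * (2*a + t*b) \<le> 0" by (simp add: power2_eq_square algebra_simps)
  then have "2*a + t*b \<le> 0" using tp by (simp add: mult_le_0_iff)
  moreover have "t*b \<ge> - (t * \<bar>b\<bar>)" using mult_left_mono[of "-\<bar>b\<bar>" b t] tp by simp
  moreover have "t * \<bar>b\<bar> < a"
  proof -
    have "t * \<bar>b\<bar> = a * (\<bar>b\<bar> / (\<bar>b\<bar> + 1))" by (simp add: t_def)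
    also have "\<dots> < a * 1" using ap by (intro mult_strict_left_mono) auto
    finally show ?thesis by simp
  qed
  ultimately show False using ap by linarith
qed

lemma mv_scale: "(S::real^3^3) *v (c *\<^sub>R x) = c *\<^sub>R (S *v x)"
  by (simp add: vec_eq_iff matrix_vector_mult_def sum_distrib_left algebra_simps)

lemma mv_add: "(S::real^3^3) *v (x + y) = S *v x + S *v y"
  by (simp add: matrix_vector_right_distrib)

lemma eig_sub:
  fixes S :: "real^3^3" and L :: "(real^3) set"
  assumes sym: "\<And>x y. (S *v x) \<bullet> y = x \<bullet> (S *v y)"
    and sub: "subspace L" and inv: "\<And>x. x \<in> L \<Longrightarrow> S *v x \<in> L"
    and x0: "x0 \<in> L" "x0 \<noteq> 0"
  shows "\<exists>v\<in>L. norm v = 1 \<and> S *v v = (v \<bullet> (S *v v)) *\<^sub>R v \<and>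
           (\<forall>x\<in>L. norm x = 1 \<longrightarrow> x \<bullet> (S *v x) \<le> v \<bullet> (S *v v))"
proof -
  define f where "f x = x \<bullet> (S *v x)" for x
  define K where "K = sphere (0::real^3) 1 \<inter> L"
  have cK: "compact K" unfolding K_def
    by (intro compact_Int_closed compact_sphere closed_subspace sub)
  have x0K: "(1 / norm x0) *\<^sub>R x0 \<in> K"
    using x0 sub by (simp add: K_def subspace_scale)
  have cf: "continuous_on K f" unfolding f_def
    by (intro continuous_intros linear_continuous_on matrix_vector_mul_bounded_linear)
  obtain v where vK: "v \<in> K" and vmax: "\<And>y. y \<in> K \<Longrightarrow> f y \<le> f v"
    using continuous_attains_sup[OF cK _ cf] x0K by blast
  define \<mu> where "\<mu> = f v"
  have vL: "v \<in> L" and nv: "norm v = 1" using vK by (auto simp: K_def)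
  have fscale: "f (c *\<^sub>R x) = c^2 * f x" for c x
    by (simp add: f_def mv_scale power2_eq_square)
  have bound: "f x \<le> \<mu> * (norm x)^2" if "x \<in> L" for x
  proof (cases "x = 0")
    case True then show ?thesis by (simp add: f_def)
  next
    case False
    then have nx: "norm x > 0" by simp
    have "(1 / norm x) *\<^sub>R x \<in> K" using that False sub by (simp add: K_def subspace_scale)
    then have "f ((1 / norm x) *\<^sub>R x) \<le> \<mu>" using vmax by (simp add: \<mu>_def)
    then have "f x / (norm x)^2 \<le> \<mu>" by (simp add: fscale power_divide)
    then show ?thesis using nx by (simp add: divide_le_eq)
  qed
  define w where "w = S *v v - \<mu> *\<^sub>R v"
  have wL: "w \<in> L" unfolding w_def using vL inv sub by (intro subspace_diff subspace_scale) auto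
  have key: "2*t*(w \<bullet> w) + t^2*(f w - \<mu> * (norm w)^2) \<le> 0" for t
  proof -
    have "v + t *\<^sub>R w \<in> L" using vL wL sub by (intro subspace_add subspace_scale) auto
    then have b: "f (v + t *\<^sub>R w) \<le> \<mu> * (norm (v + t *\<^sub>R w))^2" by (rule bound)
    have e1: "f (v + t *\<^sub>R w) = \<mu> + 2*t*(w \<bullet> (S *v v)) + t^2 * f w"
      using sym[of v w] by (simp add: f_def \<mu>_def mv_add mv_scale inner_add_left inner_add_right
          power2_eq_square inner_commute algebra_simps)
    have e2: "(norm (v + t *\<^sub>R w))^2 = 1 + 2*t*(v \<bullet> w) + t^2 * (norm w)^2"
    proof -
      have vv: "v \<bullet> v = 1" using nv by (metis power2_norm_eq_inner one_power2)
      show ?thesis unfolding power2_norm_eq_inner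
        by (simp add: inner_add_left inner_add_right vv inner_commute algebra_simps power2_eq_square)
    qed
    have e3: "w \<bullet> w = w \<bullet> (S *v v) - \<mu> * (v \<bullet> w)"
      by (simp add: w_def inner_diff_right inner_commute algebra_simps)
    show ?thesis using b unfolding e1 e2 e3 by (simp add: algebra_simps)
  qed
  have "w \<bullet> w = 0" by (rule quad_zero[OF key]) simp
  then have "S *v v = \<mu> *\<^sub>R v" by (simp add: w_def)
  moreover have "\<forall>x\<in>L. norm x = 1 \<longrightarrow> f x \<le> \<mu>"
    using vmax by (auto simp: K_def \<mu>_def)
  ultimately show ?thesis using vL nv unfolding f_def \<mu>_def by blast
qed

lemma AtA_sym: "((transpose A ** A) *v x) \<bullet> y = ((A::real^3^3) *v x) \<bullet> (A *v y)"
  by (simp add: matrix_vector_mul_assoc[symmetric] dot_lmul_matrix)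

lemma perp_exists: "\<exists>w::real^3. norm w = 1 \<and> w \<bullet> v = 0"
proof (cases "v = 0")
  case True then show ?thesis by (intro exI[of _ "axis 1 1"]) simp
next
  case False
  have "cross3 v (axis 1 1) \<noteq> 0 \<or> cross3 v (axis 2 1) \<noteq> 0"
  proof (rule ccontr)
    assume "\<not> ?thesis"
    then have "cross3 v (axis 1 1) = 0" "cross3 v (axis 2 1) = 0" by auto
    then have "v$1 = 0" "v$2 = 0" "v$3 = 0"
      by (simp_all add: cross3_def vec_eq_iff forall_3 vector_def axis_def)
    then have "v = 0" by (simp add: vec_eq_iff forall_3)
    then show False using False by simp
  qed
  then obtain w where w: "w \<noteq> 0" "w \<bullet> v = 0"
    using dot_cross_self(1)[of v] by (metis inner_commute)
  show ?thesis using w by (intro exI[of _ "(1/norm w) *\<^sub>R w"]) simp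
qed

lemma cross_unit:
  assumes "norm u1 = 1" "norm u2 = 1" "u1 \<bullet> u2 = 0"
  shows "norm (cross3 u1 u2) = 1"
proof -
  have "(norm (cross3 u1 u2))^2 = 1" using norm_cross[of u1 u2] assms by simp
  then show ?thesis using norm_ge_zero[of "cross3 u1 u2"] by (auto simp: power2_eq_1_iff)
qed

lemma perp2:
  assumes "norm u1 = 1" "norm u2 = 1" "u1 \<bullet> u2 = 0" "x \<bullet> u1 = 0" "x \<bullet> u2 = 0"
  shows "x = (x \<bullet> cross3 u1 u2) *\<^sub>R cross3 u1 u2"
proof -
  define u where "u = cross3 u1 u2"
  have nu: "u \<bullet> u = 1" using cross_unit[OF assms(1-3)] by (simp add: u_def dot_square_norm)
  have c0: "cross3 x u = 0" unfolding u_def Lagrange using assms(4,5) by simp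
  have "cross3 u (cross3 x u) = (u \<bullet> u) *\<^sub>R x - (u \<bullet> x) *\<^sub>R u" by (rule Lagrange)
  then have "0 = x - (u \<bullet> x) *\<^sub>R u" using c0 nu by simp
  then show ?thesis by (simp add: u_def inner_commute)
qed

lemma orth_rows:
  fixes M :: "real^3^3"
  assumes "\<And>i j. M$i \<bullet> M$j = (if i = j then 1 else 0)"
  shows "orthogonal_matrix M"
proof -
  have "M ** transpose M = mat 1"
    using assms by (simp add: vec_eq_iff matrix_matrix_mult_def transpose_def mat_def inner_vec_def)
  then show ?thesis
    unfolding orthogonal_matrix_def using matrix_left_right_inverse by blast
qed
lemma mul_diag: "M ** diag3 l = (\<chi> i j. M$i$j * l$j)"
  by (simp add: vec_eq_iff forall_3 diag3_def matrix_matrix_mult_def sum_3)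

lemma subspace_perp: "subspace {x::real^3. x \<bullet> v = 0}"
  by (auto simp: subspace_def inner_add_left)

lemma subspace_perp2: "subspace {x::real^3. x \<bullet> v = 0 \<and> x \<bullet> w = 0}"
  by (auto simp: subspace_def inner_add_left)

lemma svd_exists: "\<exists>l. (\<forall>i. l $ i \<ge> 0) \<and>
      (\<exists>U V. orthogonal_matrix U \<and> orthogonal_matrix V \<and> A = U ** diag3 l ** V)"
proof -
  define S where "S = transpose A ** A"
  have S1: "(S *v x) \<bullet> y = (A *v x) \<bullet> (A *v y)" for x y
    unfolding S_def by (rule AtA_sym)
  have sym: "(S *v x) \<bullet> y = x \<bullet> (S *v y)" for x y
    using S1[of x y] S1[of y x] by (simp add: inner_commute)
  have fq: "x \<bullet> (S *v x) = (A *v x) \<bullet> (A *v x)" for x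
    using S1[of x x] by (simp add: inner_commute)
  obtain v1 where nv1: "norm v1 = 1" and ev1: "S *v v1 = (v1 \<bullet> (S *v v1)) *\<^sub>R v1"
      and max1: "\<forall>x. norm x = 1 \<longrightarrow> x \<bullet> (S *v x) \<le> v1 \<bullet> (S *v v1)"
    using eig_sub[OF sym, of UNIV "axis 1 1"] by auto
  define \<mu>1 where "\<mu>1 = v1 \<bullet> (S *v v1)"
  have ev1': "S *v v1 = \<mu>1 *\<^sub>R v1" unfolding \<mu>1_def by (rule ev1)
  obtain p0 where p0: "norm p0 = 1" "p0 \<bullet> v1 = 0" using perp_exists by blast
  have inv2: "S *v x \<in> {x. x \<bullet> v1 = 0}" if "x \<in> {x. x \<bullet> v1 = 0}" for x
  proof -
    have "(S *v x) \<bullet> v1 = x \<bullet> (S *v v1)" by (rule sym)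
    also have "\<dots> = \<mu>1 * (x \<bullet> v1)" by (simp add: ev1')
    finally show ?thesis using that by simp
  qed
  obtain v2 where v2L: "v2 \<bullet> v1 = 0" and nv2: "norm v2 = 1" and ev2: "S *v v2 = (v2 \<bullet> (S *v v2)) *\<^sub>R v2"
      and max2: "\<forall>x. x \<bullet> v1 = 0 \<longrightarrow> norm x = 1 \<longrightarrow> x \<bullet> (S *v x) \<le> v2 \<bullet> (S *v v2)"
  proof -
    have "p0 \<noteq> 0" using p0 by auto
    then show ?thesis using eig_sub[OF sym subspace_perp inv2, of p0] p0 that by auto
  qed
  define \<mu>2 where "\<mu>2 = v2 \<bullet> (S *v v2)"
  have ev2': "S *v v2 = \<mu>2 *\<^sub>R v2" unfolding \<mu>2_def by (rule ev2)
  have v12: "v1 \<bullet> v2 = 0" using v2L by (simp add: inner_commute)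
  define c12 where "c12 = cross3 v1 v2"
  have nc12: "norm c12 = 1" unfolding c12_def by (rule cross_unit[OF nv1 nv2 v12])
  have c12p: "c12 \<bullet> v1 = 0" "c12 \<bullet> v2 = 0"
    unfolding c12_def using dot_cross_self[of v1 v2] by (simp_all add: inner_commute)
  have inv3: "S *v x \<in> {x. x \<bullet> v1 = 0 \<and> x \<bullet> v2 = 0}" if "x \<in> {x. x \<bullet> v1 = 0 \<and> x \<bullet> v2 = 0}" for x
  proof -
    have "(S *v x) \<bullet> v1 = x \<bullet> (S *v v1)" by (rule sym)
    also have "\<dots> = \<mu>1 * (x \<bullet> v1)" by (simp add: ev1')
    finally have 1: "(S *v x) \<bullet> v1 = \<mu>1 * (x \<bullet> v1)" .
    have "(S *v x) \<bullet> v2 = x \<bullet> (S *v v2)" by (rule sym)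
    also have "\<dots> = \<mu>2 * (x \<bullet> v2)" by (simp add: ev2')
    finally show ?thesis using that 1 by simp
  qed
  obtain v3 where v3L: "v3 \<bullet> v1 = 0" "v3 \<bullet> v2 = 0" and nv3: "norm v3 = 1"
      and ev3: "S *v v3 = (v3 \<bullet> (S *v v3)) *\<^sub>R v3"
  proof -
    have "c12 \<noteq> 0" using nc12 by auto
    then show ?thesis using eig_sub[OF sym subspace_perp2 inv3, of c12] c12p that by auto
  qed
  define \<mu>3 where "\<mu>3 = v3 \<bullet> (S *v v3)"
  have ev3': "S *v v3 = \<mu>3 *\<^sub>R v3" unfolding \<mu>3_def by (rule ev3)
  have m21: "\<mu>2 \<le> \<mu>1" using max1 nv2 by (simp add: \<mu>1_def \<mu>2_def)
  have m32: "\<mu>3 \<le> \<mu>2" using max2 nv3 v3L by (simp add: \<mu>2_def \<mu>3_def)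
  define a1 where "a1 = A *v v1"
  define a2 where "a2 = A *v v2"
  define a3 where "a3 = A *v v3"
  have vv: "v1 \<bullet> v1 = 1" "v2 \<bullet> v2 = 1" "v3 \<bullet> v3 = 1"
    using nv1 nv2 nv3 by (simp_all add: dot_square_norm)
  have v13: "v1 \<bullet> v3 = 0" "v2 \<bullet> v3 = 0" using v3L by (simp_all add: inner_commute)
  have aa: "a1 \<bullet> a2 = 0" "a1 \<bullet> a3 = 0" "a2 \<bullet> a3 = 0"
    "a1 \<bullet> a1 = \<mu>1" "a2 \<bullet> a2 = \<mu>2" "a3 \<bullet> a3 = \<mu>3"
    unfolding a1_def a2_def a3_def S1[symmetric] ev1' ev2' ev3'
    by (simp_all add: v12 v13 vv)
  define V where "V = (\<chi> i::3. if i = 1 then v1 else if i = 2 then v2 else v3)"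
  have V: "V$1 = v1" "V$2 = v2" "V$3 = v3" by (simp_all add: V_def)
  have oV: "orthogonal_matrix V"
  proof (rule orth_rows)
    fix i j :: 3
    show "V$i \<bullet> V$j = (if i = j then 1 else 0)"
      using exhaust_3[of i] exhaust_3[of j] V vv v12 v13 v2L v3L by (auto simp: inner_commute)
  qed
  show ?thesis
  proof (cases "a1 = 0")
    case True
    then have "\<mu>1 = 0" using aa(4) by simp
    then have z: "A *v x = 0" if "norm x = 1" for x
    proof -
      have "x \<bullet> (S *v x) \<le> \<mu>1" using max1 that unfolding \<mu>1_def by blast
      then have "(A *v x) \<bullet> (A *v x) \<le> 0" using fq[of x] \<open>\<mu>1 = 0\<close> by simp
      then show ?thesis by (metis inner_gt_zero_iff not_le)
    qed
    have "A *v x = 0 *v x" for x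
    proof (cases "x = 0")
      case True then show ?thesis by simp
    next
      case False
      have "A *v x = A *v (norm x *\<^sub>R ((1 / norm x) *\<^sub>R x))" using False by simp
      also have "\<dots> = norm x *\<^sub>R (A *v ((1 / norm x) *\<^sub>R x))" by (rule mv_scale)
      also have "\<dots> = 0" using z[of "(1 / norm x) *\<^sub>R x"] False by simp
      finally show ?thesis by simp
    qed
    then have "A = 0" by (simp add: matrix_eq)
    moreover have "(0::real^3^3) = mat 1 ** diag3 0 ** mat 1"
      by (simp add: vec_eq_iff diag3_def)
    ultimately show ?thesis using orthogonal_matrix_id by (intro exI[of _ 0]) auto
  next
    case False
    define u1 where "u1 = (1 / norm a1) *\<^sub>R a1"
    obtain p where p: "norm p = 1" "p \<bullet> u1 = 0" using perp_exists by blast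
    define u2 where "u2 = (if a2 = 0 then p else (1 / norm a2) *\<^sub>R a2)"
    have nu1: "norm u1 = 1" using False by (simp add: u1_def)
    have nu2: "norm u2 = 1" using p by (simp add: u2_def)
    have u12: "u1 \<bullet> u2 = 0" using p aa(1) by (auto simp: u2_def u1_def inner_commute)
    define c where "c = cross3 u1 u2"
    define u3 where "u3 = (if a3 \<bullet> c \<ge> 0 then c else - c)"
    have nc: "norm c = 1" unfolding c_def by (rule cross_unit[OF nu1 nu2 u12])
    have cp: "c \<bullet> u1 = 0" "c \<bullet> u2 = 0"
      unfolding c_def using dot_cross_self[of u1 u2] by (simp_all add: inner_commute)
    have nu3: "norm u3 = 1" using nc by (simp add: u3_def)
    have u3p: "u3 \<bullet> u1 = 0" "u3 \<bullet> u2 = 0" using cp by (simp_all add: u3_def)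
    define l1 where "l1 = norm a1"
    define l2 where "l2 = norm a2"
    define l3 where "l3 = a3 \<bullet> u3"
    have l3p: "l3 \<ge> 0" by (simp add: l3_def u3_def)
    have a1e: "a1 = l1 *\<^sub>R u1" using False by (simp add: l1_def u1_def)
    have a2e: "a2 = l2 *\<^sub>R u2" by (simp add: l2_def u2_def)
    have a3e: "a3 = l3 *\<^sub>R u3"
    proof (cases "a3 = 0")
      case True then show ?thesis by (simp add: l3_def)
    next
      case a3n: False
      then have "\<mu>3 > 0" using aa(6) by (metis inner_gt_zero_iff)
      then have "\<mu>2 > 0" using m32 by simp
      then have a2n: "a2 \<noteq> 0" using aa(5) by auto
      have "a3 \<bullet> u1 = 0" using aa(2) by (simp add: u1_def inner_commute)
      moreover have "a3 \<bullet> u2 = 0" using aa(3) a2n by (simp add: u2_def inner_commute)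
      ultimately have "a3 = (a3 \<bullet> c) *\<^sub>R c" unfolding c_def by (rule perp2[OF nu1 nu2 u12])
      then show ?thesis by (simp add: l3_def u3_def)
    qed
    define Mu where "Mu = (\<chi> i::3. if i = 1 then u1 else if i = 2 then u2 else u3)"
    have Mu: "Mu$1 = u1" "Mu$2 = u2" "Mu$3 = u3" by (simp_all add: Mu_def)
    have uu: "u1 \<bullet> u1 = 1" "u2 \<bullet> u2 = 1" "u3 \<bullet> u3 = 1"
      using nu1 nu2 nu3 by (simp_all add: dot_square_norm)
    have oMu: "orthogonal_matrix Mu"
    proof (rule orth_rows)
      fix i j :: 3
      show "Mu$i \<bullet> Mu$j = (if i = j then 1 else 0)"
        using exhaust_3[of i] exhaust_3[of j] Mu uu u12 u3p by (auto simp: inner_commute)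
    qed
    define U where "U = transpose Mu"
    have oU: "orthogonal_matrix U" using oMu by (simp add: U_def)
    define l where "l = (\<chi> i::3. if i = 1 then l1 else if i = 2 then l2 else l3)"
    have l: "l$1 = l1" "l$2 = l2" "l$3 = l3" by (simp_all add: l_def)
    have l0: "\<forall>i. l$i \<ge> 0"
    proof
      fix i :: 3 show "l$i \<ge> 0" using exhaust_3[of i] l l3p by (auto simp: l1_def l2_def)
    qed
    have col: "A *v (V$q) = (l$q) *\<^sub>R (Mu$q)" for q
      using exhaust_3[of q] V Mu l a1e a2e a3e by (auto simp: a1_def a2_def a3_def)
    have AV: "A ** transpose V = U ** diag3 l"
    proof -
      have "(A ** transpose V)$p$q = (A *v (V$q))$p" for p q
        by (simp add: matrix_matrix_mult_def matrix_vector_mult_def transpose_def)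
      then show ?thesis
        by (simp add: vec_eq_iff col mul_diag U_def transpose_def mult.commute)
    qed
    have "A = A ** (transpose V ** V)" using oV by (simp add: orthogonal_matrix_def)
    also have "\<dots> = U ** diag3 l ** V" by (simp add: matrix_mul_assoc AV)
    finally show ?thesis using l0 oU oV by blast
  qed
qed


lemma svals_spec: "(\<forall>i. svals A $ i \<ge> 0) \<and>
      (\<exists>U V. orthogonal_matrix U \<and> orthogonal_matrix V \<and> A = U ** diag3 (svals A) ** V)"
  unfolding svals_def by (rule someI_ex[OF svd_exists])

lemma abs_le1: "(a::real)^2 + b^2 + c^2 = 1 \<Longrightarrow> \<bar>a\<bar> \<le> 1"
proof -
  assume "a^2 + b^2 + c^2 = 1"
  then have "a^2 \<le> 1" using zero_le_power2[of b] zero_le_power2[of c] by linarith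
  then show ?thesis by (simp add: abs_square_le_1)
qed

lemma G_bound:
  assumes lam: "lam > 0"
  shows "\<bar>Gfun lam A\<bar> \<le> sqrt 2 * (norm A)^2 + 2* sqrt 3*lam*norm A"
proof -
  define l where "l = svals A"
  obtain U V where oU: "orthogonal_matrix U" and oV: "orthogonal_matrix V" and A: "A = U ** diag3 l ** V"
    using svals_spec[of A] unfolding l_def by blast
  have l0: "l$1 \<ge> 0" "l$2 \<ge> 0" "l$3 \<ge> 0" using svals_spec[of A] unfolding l_def by auto
  define W where "W = V ** U"
  have oW: "orthogonal_matrix W" using oU oV by (simp add: W_def orthogonal_matrix_mul)
  define d where "d = det W"
  have d: "d = 1 \<or> d = -1" unfolding d_def by (rule det_orthogonal_matrix[OF oW])
  have d2: "d * d = 1" using d by auto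
  note dec = decomp[OF oU oV A, folded W_def]
  note of = orth_facts[OF oW, folded d_def]
  define x1 where "x1 = d*W$1$1"
  define x2 where "x2 = d*W$2$2"
  define x3 where "x3 = d*W$3$3"
  have r4: "1 + x1 + x2 + x3 \<ge> 0" "1 + x1 - x2 - x3 \<ge> 0" "1 - x1 + x2 - x3 \<ge> 0" "1 - x1 - x2 + x3 \<ge> 0"
    unfolding x1_def x2_def x3_def
    by (rule rot4[of "d*W$1$1" "d*W$1$2" "d*W$1$3" "d*W$2$1" "d*W$2$2" "d*W$2$3" "d*W$3$1" "d*W$3$2" "d*W$3$3"];
        use d of in auto)+
  have Qb: "l$2*l$3*(1-x1) + l$1*l$3*(1-x2) + l$1*l$2*(1-x3) \<le> sqrt 2 * ((l$1)^2+(l$2)^2+(l$3)^2)"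
    by (rule Qbound[OF l0 r4])
  have a1: "\<bar>W$1$1\<bar> \<le> 1" by (rule abs_le1[of _ "W$1$2" "W$1$3"]) (use of(1) in linarith)
  have a2: "\<bar>W$2$2\<bar> \<le> 1" by (rule abs_le1[of _ "W$2$1" "W$2$3"]) (use of(2) in linarith)
  have a3: "\<bar>W$3$3\<bar> \<le> 1" by (rule abs_le1[of _ "W$3$1" "W$3$2"]) (use of(3) in linarith)
  have ax: "x1 \<le> 1" "x2 \<le> 1" "x3 \<le> 1" using a1 a2 a3 d by (auto simp: x1_def x2_def x3_def)
  define Q where "Q = l$2*l$3*(1-x1) + l$1*l$3*(1-x2) + l$1*l$2*(1-x3)"
  define Lin where "Lin = lam*(l$1*(W$1$1 - 1) + l$2*(W$2$2 - 1) + l$3*(W$3$3 - 1))"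
  have G: "Gfun lam A = Q + Lin"
    unfolding Gfun_def Pfun_eq Nfun_def l_def[symmetric] dec(1) dec(2)[folded d_def] Q_def Lin_def x1_def x2_def x3_def
    by (simp add: algebra_simps)
  have Q0: "Q \<ge> 0" unfolding Q_def using ax l0 by (intro add_nonneg_nonneg mult_nonneg_nonneg) auto
  define e1 where "e1 = l$1 + l$2 + l$3"
  have Linb: "\<bar>Lin\<bar> \<le> 2*lam*e1"
  proof -
    have "\<bar>l$1*(W$1$1 - 1) + l$2*(W$2$2 - 1) + l$3*(W$3$3 - 1)\<bar> \<le> l$1*2 + l$2*2 + l$3*2"
    proof -
      have "\<bar>l$1*(W$1$1 - 1)\<bar> \<le> l$1*2" using a1 l0 by (simp add: abs_mult mult_left_mono)
      moreover have "\<bar>l$2*(W$2$2 - 1)\<bar> \<le> l$2*2" using a2 l0 by (simp add: abs_mult mult_left_mono)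
      moreover have "\<bar>l$3*(W$3$3 - 1)\<bar> \<le> l$3*2" using a3 l0 by (simp add: abs_mult mult_left_mono)
      ultimately show ?thesis by linarith
    qed
    then have "lam * \<bar>l$1*(W$1$1 - 1) + l$2*(W$2$2 - 1) + l$3*(W$3$3 - 1)\<bar> \<le> lam * (l$1*2 + l$2*2 + l$3*2)"
      using lam by (intro mult_left_mono) auto
    moreover have "\<bar>Lin\<bar> = lam * \<bar>l$1*(W$1$1 - 1) + l$2*(W$2$2 - 1) + l$3*(W$3$3 - 1)\<bar>"
      unfolding Lin_def using lam by (simp add: abs_mult)
    ultimately show ?thesis unfolding e1_def by (simp add: algebra_simps)
  qed
  have e1b: "e1 \<le> sqrt 3 * norm A"
  proof -
    have "e1^2 \<le> 3 * (norm A)^2"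
      unfolding dec(3) e1_def
      using zero_le_power2[of "l$1 - l$2"] zero_le_power2[of "l$1 - l$3"] zero_le_power2[of "l$2 - l$3"]
      by (simp add: power2_eq_square algebra_simps)
    then have "e1 \<le> sqrt (3 * (norm A)^2)" by (rule real_le_rsqrt)
    then show ?thesis by (simp add: real_sqrt_mult)
  qed
  have "\<bar>Gfun lam A\<bar> \<le> Q + \<bar>Lin\<bar>" unfolding G using Q0 by linarith
  also have "\<dots> \<le> sqrt 2 * (norm A)^2 + 2*lam*(sqrt 3 * norm A)"
    using Qb Linb e1b lam unfolding Q_def dec(3)
    by (smt (verit) mult_left_mono)
  finally show ?thesis by (simp add: algebra_simps)
qed

definition At :: "real \<Rightarrow> mat3" where
  "At t = diag3 (\<chi> i. if i = 3 then - (sqrt 2 * t) else t)"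

lemma sq_cases:
  fixes q t :: real
  assumes "q \<ge> 0" "t > 0" "q^2 = t^2 \<or> q^2 = 2*t^2"
  shows "q = t \<or> q = sqrt 2 * t"
proof -
  have qq: "q = sqrt (q^2)" using assms(1) by simp
  have tt: "sqrt (t^2) = t" using assms(2) by simp
  from assms(3) show ?thesis
  proof
    assume "q^2 = t^2" then show ?thesis using qq tt by simp
  next
    assume "q^2 = 2*t^2" then have "q = sqrt (2*t^2)" using qq by simp
    then show ?thesis using tt by (simp add: real_sqrt_mult)
  qed
qed

lemma At_svals:
  assumes t: "t > 0"
  shows "svals (At t) $ 1 + svals (At t) $ 2 + svals (At t) $ 3 = (2 + sqrt 2) * t"
    "svals (At t) $ 1 * svals (At t) $ 2 + svals (At t) $ 1 * svals (At t) $ 3 + svals (At t) $ 2 * svals (At t) $ 3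
      = t^2 + 2 * sqrt 2 * t^2"
proof -
  define A where "A = At t"
  define l where "l = svals A"
  define D where "D = diag3 l"
  obtain U V where oU: "orthogonal_matrix U" and oV: "orthogonal_matrix V" and A: "A = U ** D ** V"
    using svals_spec[of A] unfolding l_def D_def by blast
  have l0: "l$1 \<ge> 0" "l$2 \<ge> 0" "l$3 \<ge> 0" using svals_spec[of A] unfolding l_def by auto
  have "(A ** transpose A) ** U = U ** (D ** (V ** transpose V) ** (D ** (transpose U ** U)))"
    by (simp add: A matrix_transpose_mul D_def transpose_diag3 matrix_mul_assoc)
  also have "\<dots> = U ** (D ** D)" using oU oV by (simp add: orthogonal_matrix_def)
  finally have M: "(A ** transpose A) ** U = U ** (D ** D)" .
  have E: "t^2 * U$1$j = U$1$j * (l$j)^2" "t^2 * U$2$j = U$2$j * (l$j)^2" "(2*t^2) * U$3$j = U$3$j * (l$j)^2" for j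
  proof -
    have "((A ** transpose A) ** U)$i$j = (U ** (D ** D))$i$j" for i using M by simp
    note e = this[unfolded A_def At_def D_def]
    show "t^2 * U$1$j = U$1$j * (l$j)^2" using e[of 1] exhaust_3[of j]
      by (auto simp: matrix_matrix_mult_def sum_3 diag3_def transpose_def power2_eq_square)
    show "t^2 * U$2$j = U$2$j * (l$j)^2" using e[of 2] exhaust_3[of j]
      by (auto simp: matrix_matrix_mult_def sum_3 diag3_def transpose_def power2_eq_square)
    have s: "sqrt 2 * (t * (sqrt 2 * t)) = 2*(t*t)"
    proof -
      have "sqrt 2 * (t * (sqrt 2 * t)) = (sqrt 2)^2 * (t*t)" by (simp add: power2_eq_square mult_ac)
      then show ?thesis by simp
    qed
    show "(2*t^2) * U$3$j = U$3$j * (l$j)^2" using e[of 3] exhaust_3[of j]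
      by (auto simp: matrix_matrix_mult_def sum_3 diag3_def transpose_def power2_eq_square s)
  qed
  have C: "(U$1$j)^2 + (U$2$j)^2 + (U$3$j)^2 = 1" for j
  proof -
    have m: "transpose U ** U = mat 1" using oU by (simp add: orthogonal_matrix_def)
    show ?thesis using arg_cong[OF m, of "\<lambda>M. M$j$j"]
      by (simp add: matrix_matrix_mult_def sum_3 transpose_def mat_def power2_eq_square)
  qed
  have L: "(l$j)^2 = t^2 \<or> (l$j)^2 = 2*t^2" for j
  proof (rule ccontr)
    assume "\<not> ((l$j)^2 = t^2 \<or> (l$j)^2 = 2*t^2)"
    then have n1: "t^2 \<noteq> (l$j)^2" and n2: "2*t^2 \<noteq> (l$j)^2" by auto
    have "U$1$j = 0" using E(1)[of j] n1 by (metis mult.commute mult_right_cancel)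
    moreover have "U$2$j = 0" using E(2)[of j] n1 by (metis mult.commute mult_right_cancel)
    moreover have "U$3$j = 0" using E(3)[of j] n2 by (metis mult.commute mult_right_cancel)
    ultimately show False using C[of j] by simp
  qed
  have S: "(l$1)^2 + (l$2)^2 + (l$3)^2 = 4 * t^2"
  proof -
    have "(norm A)^2 = (l$1)^2 + (l$2)^2 + (l$3)^2" using decomp(3)[OF oU oV A[unfolded D_def]] .
    moreover have "(norm A)^2 = 4 * t^2"
      unfolding norm_sq_entries A_def At_def by (simp add: sum_3 diag3_def power_mult_distrib)
    ultimately show ?thesis by simp
  qed
  have q: "l$j = t \<or> l$j = sqrt 2 * t" if "l$j \<ge> 0" for j
    using sq_cases[OF that t L[of j]] .
  have s2: "(sqrt 2 * t)^2 = 2 * t^2" by (simp add: power_mult_distrib)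
  have t2: "t^2 > 0" using t by simp
  from q[OF l0(1)] q[OF l0(2)] q[OF l0(3)] S t2 s2
  show "svals (At t) $ 1 + svals (At t) $ 2 + svals (At t) $ 3 = (2 + sqrt 2) * t"
    "svals (At t) $ 1 * svals (At t) $ 2 + svals (At t) $ 1 * svals (At t) $ 3 + svals (At t) $ 2 * svals (At t) $ 3
      = t^2 + 2 * sqrt 2 * t^2"
    unfolding l_def A_def by (auto simp: algebra_simps power2_eq_square)
qed

lemma At_G:
  assumes t: "t > 0"
  shows "Gfun lam (At t) = 4 * sqrt 2 * t^2 - 2 * sqrt 2 * lam * t"
proof -
  have s: "sqrt 2 * sqrt 2 = 2" by simp
  have tr: "trace (At t) = 2 * t - sqrt 2 * t"
    by (simp add: At_def diag3_def trace_def sum_3)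
  have tc: "trace (cof (At t)) = t^2 - 2 * sqrt 2 * t^2"
    unfolding trace_cof by (simp add: At_def diag3_def power2_eq_square algebra_simps)
  show ?thesis
    unfolding Gfun_def Pfun_eq At_svals[OF t] Nfun_def tr tc
    by (simp add: algebra_simps)
qed

lemma At_norm:
  "(norm (At t - lam *\<^sub>R mat 1))^2 = 4 * t^2 + (2 * sqrt 2 - 4) * lam * t + 3 * lam^2"
proof -
  have s: "(sqrt 2 * t)^2 = 2 * t^2" by (simp add: power_mult_distrib)
  show ?thesis
    unfolding norm_sq_entries
    by (simp add: At_def diag3_def mat_def sum_3 power2_eq_square algebra_simps)
qed

lemma entry_le_norm: "\<bar>(A::real^3^3)$i$j\<bar> \<le> norm A"
  using component_le_norm_cart[of "A$i" j] Finite_Cartesian_Product.norm_nth_le[of A i] by simp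

lemma At_norm_ge:
  assumes "t > 0" "lam > 0"
  shows "norm (At t - lam *\<^sub>R mat 1) \<ge> t"
proof -
  have p: "sqrt 2 * t + lam > 0" using assms by (simp add: add_pos_pos)
  have "(At t - lam *\<^sub>R mat 1)$3$3 = - (sqrt 2 * t + lam)"
    by (simp add: At_def diag3_def mat_def)
  then have "\<bar>(At t - lam *\<^sub>R mat 1)$3$3\<bar> = sqrt 2 * t + lam" using p by simp
  moreover have "sqrt 2 * t \<ge> 1 * t" using assms by (intro mult_right_mono) auto
  ultimately show ?thesis using entry_le_norm[of "At t - lam *\<^sub>R mat 1" 3 3] assms by linarith
qed

lemma norm_mat1: "norm (mat 1 :: real^3^3) = sqrt 3"
proof -
  have "(norm (mat 1 :: real^3^3))^2 = 3"
    unfolding norm_sq_entries by (simp add: mat_def sum_3)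
  then show ?thesis
    by (metis norm_ge_zero real_sqrt_unique)
qed

definition hb :: "real \<Rightarrow> real \<Rightarrow> real" where
  "hb lam c = sqrt 2 * (1 + lam * sqrt 3 / c)^2 + 2 * sqrt 3 * lam * (1/c + lam * sqrt 3 / c^2)"

lemma ratio_upper:
  assumes lam: "lam > 0" and c0: "c0 \<ge> 1" and r: "norm (A - lam *\<^sub>R mat 1) \<ge> c0"
  shows "\<bar>Gfun lam A\<bar> / (norm (A - lam *\<^sub>R mat 1))^2 \<le> hb lam c0"
proof -
  define r where "r = norm (A - lam *\<^sub>R mat 1)"
  define k where "k = lam * sqrt 3"
  define N where "N = norm A"
  have r0: "r > 0" "r \<ge> c0" using c0 r unfolding r_def by auto
  have k0: "k \<ge> 0" using lam by (simp add: k_def)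
  have N0: "N \<ge> 0" by (simp add: N_def)
  have Nr: "N \<le> r + k"
  proof -
    have "norm A \<le> norm (A - lam *\<^sub>R mat 1) + norm (lam *\<^sub>R (mat 1 :: real^3^3))"
      by (metis diff_add_cancel norm_triangle_ineq)
    then show ?thesis using lam by (simp add: N_def r_def k_def norm_mat1)
  qed
  have "\<bar>Gfun lam A\<bar> \<le> sqrt 2 * N^2 + 2 * sqrt 3 * lam * N"
    using G_bound[OF lam] by (simp add: N_def)
  also have "\<dots> \<le> sqrt 2 * (r+k)^2 + 2 * sqrt 3 * lam * (r+k)"
  proof -
    have "N^2 \<le> (r+k)^2" using Nr N0 by (intro power_mono) auto
    then show ?thesis using Nr lam
      by (intro add_mono mult_left_mono) auto
  qed
  finally have g: "\<bar>Gfun lam A\<bar> / r^2 \<le> (sqrt 2 * (r+k)^2 + 2 * sqrt 3 * lam * (r+k)) / r^2"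
    using r0 by (intro divide_right_mono) auto
  also have "\<dots> = sqrt 2 * (1 + k/r)^2 + 2 * sqrt 3 * lam * (1/r + k/r^2)"
    using r0 by (simp add: field_simps power2_eq_square)
  also have "\<dots> \<le> sqrt 2 * (1 + k/c0)^2 + 2 * sqrt 3 * lam * (1/c0 + k/c0^2)"
  proof -
    have c00: "c0 > 0" using c0 by simp
    have a: "k/r \<le> k/c0" using k0 r0 c00 by (intro divide_left_mono) auto
    have b: "1/r \<le> 1/c0" using r0 c00 by (intro divide_left_mono) auto
    have "c0^2 \<le> r^2" using r0 c00 by (intro power_mono) auto
    then have c: "k/r^2 \<le> k/c0^2" using k0 c00 r0(1) by (intro divide_left_mono) auto
    have "(1 + k/r)^2 \<le> (1 + k/c0)^2" using a k0 r0 by (intro power_mono) auto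
    then show ?thesis using b c lam
      by (intro add_mono mult_left_mono) auto
  qed
  finally show ?thesis unfolding r_def hb_def k_def .
qed

theorem proposition3p6:
  fixes lam :: real
  assumes "lam > 0"
  shows "((\<lambda>c0. M2 lam c0) \<longlongrightarrow> sqrt 2) at_top"
proof -
  have lam: "lam > 0" by (rule assms)
  define S where "S c0 = {A :: mat3. norm (A - lam *\<^sub>R mat 1) \<ge> c0}" for c0
  define f where "f A = \<bar>Gfun lam A\<bar> / (norm (A - lam *\<^sub>R mat 1))^2" for A
  have M2eq: "M2 lam c0 = (SUP A \<in> S c0. f A)" for c0 by (simp add: M2_def S_def f_def)
  have bdd: "bdd_above (f ` S c0)" if "c0 \<ge> 1" for c0
    using ratio_upper[OF lam that] unfolding S_def f_def by (auto intro!: bdd_aboveI2)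
  have AtS: "At t \<in> S c0" if "t \<ge> c0" "t > 0" for t c0
    using At_norm_ge[OF that(2) lam] that unfolding S_def by auto
  have up: "M2 lam c0 \<le> hb lam c0" if "c0 \<ge> 1" for c0
    unfolding M2eq
  proof (rule cSUP_least)
    show "S c0 \<noteq> {}" using AtS[of c0 c0] that by auto
    show "\<And>A. A \<in> S c0 \<Longrightarrow> f A \<le> hb lam c0"
      using ratio_upper[OF lam that] unfolding S_def f_def by auto
  qed
  have low: "sqrt 2 \<le> M2 lam c0" if "c0 \<ge> 1" for c0
  proof (rule tendsto_le[OF trivial_limit_at_top_linorder tendsto_const])
    show "((\<lambda>t::real. \<bar>4 * sqrt 2 * t^2 - 2 * sqrt 2 * lam * t\<bar> / (4 * t^2 + (2 * sqrt 2 - 4) * lam * t + 3 * lam^2)) \<longlongrightarrow> sqrt 2) at_top"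
      by (real_asymp simp add: sqrt_def)
    show "\<forall>\<^sub>F t in at_top. \<bar>4 * sqrt 2 * t^2 - 2 * sqrt 2 * lam * t\<bar> / (4 * t^2 + (2 * sqrt 2 - 4) * lam * t + 3 * lam^2) \<le> M2 lam c0"
      unfolding eventually_at_top_linorder
    proof (intro exI allI impI)
      fix t :: real assume tc: "t \<ge> c0"
      then have t0: "t > 0" using that by simp
      have "f (At t) \<le> M2 lam c0"
        unfolding M2eq by (rule cSUP_upper[OF AtS[OF tc t0] bdd[OF that]])
      then show "\<bar>4 * sqrt 2 * t^2 - 2 * sqrt 2 * lam * t\<bar> / (4 * t^2 + (2 * sqrt 2 - 4) * lam * t + 3 * lam^2) \<le> M2 lam c0"
        unfolding f_def At_G[OF t0] At_norm .
    qed
  qed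
  show ?thesis
  proof (rule tendsto_sandwich[of "\<lambda>_. sqrt 2" _ _ "hb lam"])
    show "\<forall>\<^sub>F n in at_top. sqrt 2 \<le> M2 lam n"
      using low by (auto simp: eventually_at_top_linorder)
    show "\<forall>\<^sub>F n in at_top. M2 lam n \<le> hb lam n"
      using up by (auto simp: eventually_at_top_linorder)
    show "((\<lambda>_. sqrt 2) \<longlongrightarrow> sqrt 2) at_top" by simp
    show "(hb lam \<longlongrightarrow> sqrt 2) at_top"
      unfolding hb_def by (real_asymp simp add: sqrt_def)
  qed
qed


end
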